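(* Fix $\varepsilon\in(0,1)$. Let $L$ be a finite set of links, with fixed transmission powers $P_l>0$ satisfying $P_l\eta\|l\|^{-\kappa}>\sigma\xi$ for every $l\in L$, and with nonnegative weights $w_l$ for $l\in L$. Let $S^\ast$ be any $1$-signal set of links (possibly containing links outside $L$), and let $X\subseteq L$ be a $\frac{1}{1-\varepsilon}$-signal subset of $L$ of maximum total weight among all $\frac1{1-\varepsilon}$-signal subsets of $L$. Then $$W(S^\ast\cap L)\;\le\;\frac{4}{(1-\varepsilon)^2}\,W(X).$$
   Context: A link $l=(u,v)$ consists of a sender $u$ and a receiver $v$ in the plane, and $\|l\|=\|uv\|$ is its length. The sender of $l$ transmits at the fixed power $P_l$. The constants are $\eta>0$ (reference loss), $\kappa>2$ (path-loss exponent), $\sigma>0$ (SINR threshold) and $\xi\ge0$ (noise). For a link $l'=(u',v')$ and a link $l=(u,v)$, the relative interference of $l'$ on $l$ is $$r_{l'}(l)=\frac{P_{l'}\eta\|u'v\|^{-\kappa}}{P_l\eta\|uv\|^{-\kappa}},$$ with the convention $r_l(l)=0$. Let $$c_l=\frac{\sigma}{1-\sigma\xi/(P_l\eta\|l\|^{-\kappa})}.$$ The affectness of $l$ caused by a set $S$ of links is $a_S(l)=c_l\sum_{l'\in S}r_{l'}(l)$. For $p>0$, a set $S$ of links is a $p$-signal set if $a_S(l)\le 1/p$ for every $l\in S$. A $1$-signal set is exactly a set in which every link satisfies the SINR condition $\mathrm{SINR}\ge\sigma$ when all links of the set transmit simultaneously. For a set $S$ of links, $W(S)=\sum_{l\in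 S}w_l$ denotes its total weight. *)

theory Defs
  imports "HOL-Analysis.Analysis"
begin

text \<open>Links are elements of an arbitrary type 'l; each link l has a sender
  position u l and a receiver position v l in the plane (real^2).\<close>

definition link_len :: "('l \<Rightarrow> real^2) \<Rightarrow> ('l \<Rightarrow> real^2) \<Rightarrow> 'l \<Rightarrow> real" where
  "link_len u v l = dist (u l) (v l)"

definition rel_interf ::
  "real \<Rightarrow> real \<Rightarrow> ('l \<Rightarrow> real^2) \<Rightarrow> ('l \<Rightarrow> real^2) \<Rightarrow> ('l \<Rightarrow> real) \<Rightarrow> 'l \<Rightarrow> 'l \<Rightarrow> real" where
  "rel_interf \<eta> \<kappa> u v P l' l =
     (if l' = l then 0
      else (P l' * \<eta> * dist (u l') (v l) powr (-\<kappa>)) /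
           (P l * \<eta> * link_len u v l powr (-\<kappa>)))"

definition c_fac ::
  "real \<Rightarrow> real \<Rightarrow> real \<Rightarrow> real \<Rightarrow> ('l \<Rightarrow> real^2) \<Rightarrow> ('l \<Rightarrow> real^2) \<Rightarrow> ('l \<Rightarrow> real) \<Rightarrow> 'l \<Rightarrow> real" where
  "c_fac \<eta> \<kappa> \<sigma> \<xi> u v P l =
     \<sigma> / (1 - \<sigma> * \<xi> / (P l * \<eta> * link_len u v l powr (-\<kappa>)))"

definition affectness ::
  "real \<Rightarrow> real \<Rightarrow> real \<Rightarrow> real \<Rightarrow> ('l \<Rightarrow> real^2) \<Rightarrow> ('l \<Rightarrow> real^2) \<Rightarrow> ('l \<Rightarrow> real)
     \<Rightarrow> 'l set \<Rightarrow> 'l \<Rightarrow> real" where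
  "affectness \<eta> \<kappa> \<sigma> \<xi> u v P S l =
     c_fac \<eta> \<kappa> \<sigma> \<xi> u v P l * (\<Sum>l'\<in>S. rel_interf \<eta> \<kappa> u v P l' l)"

text \<open>A sender located exactly at the
  receiver of another link of the set would cause infinite interference
  (distance^(-kappa) = infinity), which Isabelle's powr would render as 0;
  such configurations are therefore explicitly excluded.\<close>
definition p_signal ::
  "real \<Rightarrow> real \<Rightarrow> real \<Rightarrow> real \<Rightarrow> ('l \<Rightarrow> real^2) \<Rightarrow> ('l \<Rightarrow> real^2) \<Rightarrow> ('l \<Rightarrow> real)
     \<Rightarrow> real \<Rightarrow> 'l set \<Rightarrow> bool" where
  "p_signal \<eta> \<kappa> \<sigma> \<xi> u v P p S \<longleftrightarrow>
     finite S \<and>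
     (\<forall>l\<in>S. \<forall>l'\<in>S. l' \<noteq> l \<longrightarrow> u l' \<noteq> v l) \<and>
     (\<forall>l\<in>S. affectness \<eta> \<kappa> \<sigma> \<xi> u v P S l \<le> 1 / p)"

definition total_weight :: "('l \<Rightarrow> real) \<Rightarrow> 'l set \<Rightarrow> real" where
  "total_weight w S = (\<Sum>l\<in>S. w l)"

end

theory Submission
  imports Defs
begin

definition pm :: "real \<Rightarrow> 'a set \<Rightarrow> 'a set \<Rightarrow> real" where
  "pm p T Z = p ^ card Z * (1 - p) ^ card (T - Z)"

lemma pm_sum:
  assumes "finite T"
  shows "A \<subseteq> T \<Longrightarrow> (\<Sum>Z\<in>Pow T. if A \<subseteq> Z then pm p T Z else 0) = p ^ card A"
  using assms
proof (induction T arbitrary: A rule: finite_induct)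
  case empty
  then show ?case by (simp add: pm_def)
next
  case (insert x T)
  have disj: "Pow T \<inter> insert x ` Pow T = {}" using insert.hyps by auto
  have inj: "inj_on (insert x) (Pow T)" using insert.hyps
    by (auto simp: inj_on_def)
  have fin: "finite (Pow T)" using insert.hyps by simp
  have pm1: "pm p (insert x T) Z = (1 - p) * pm p T Z" if "Z \<subseteq> T" for Z
  proof -
    have "insert x T - Z = insert x (T - Z)" using that insert.hyps by auto
    moreover have "card (insert x (T - Z)) = Suc (card (T - Z))" using insert.hyps by simp
    ultimately show ?thesis by (simp add: pm_def)
  qed
  have pm2: "pm p (insert x T) (insert x Z) = p * pm p T Z" if "Z \<subseteq> T" for Z
  proof -
    have "insert x T - insert x Z = T - Z" using that insert.hyps by auto
    moreover have "card (insert x Z) = Suc (card Z)" using insert.hyps that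
      by (meson card_insert_disjoint finite_subset subsetD)
    ultimately show ?thesis by (simp add: pm_def)
  qed
  define F where "F = (\<lambda>Z. if A \<subseteq> Z then pm p (insert x T) Z else 0)"
  have "(\<Sum>Z\<in>Pow (insert x T). F Z) = (\<Sum>Z\<in>Pow T. F Z) + (\<Sum>Z\<in>insert x ` Pow T. F Z)"
    unfolding Pow_insert using disj fin by (simp add: sum.union_disjoint)
  also have "(\<Sum>Z\<in>insert x ` Pow T. F Z) = (\<Sum>Z\<in>Pow T. F (insert x Z))"
    using inj by (simp add: sum.reindex)
  finally have split: "(\<Sum>Z\<in>Pow (insert x T). F Z) = (\<Sum>Z\<in>Pow T. F Z) + (\<Sum>Z\<in>Pow T. F (insert x Z))" .
  show ?case
  proof (cases "x \<in> A")
    case True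
    have A': "A - {x} \<subseteq> T" using insert.prems by auto
    have "(\<Sum>Z\<in>Pow T. F Z) = 0"
      using True insert.hyps by (intro sum.neutral) (auto simp: F_def)
    moreover have "(\<Sum>Z\<in>Pow T. F (insert x Z)) = p * (\<Sum>Z\<in>Pow T. if A - {x} \<subseteq> Z then pm p T Z else 0)"
      unfolding sum_distrib_left
      by (rule sum.cong) (use True pm2 in \<open>auto simp: F_def\<close>)
    moreover have "card A = Suc (card (A - {x}))"
      using True A' insert.hyps by (metis card_Suc_Diff1 finite_insert finite_subset insert.prems)
    ultimately show ?thesis using split insert.IH[OF A'] by (simp add: F_def)
  next
    case False
    have A': "A \<subseteq> T" using insert.prems False by auto
    have "(\<Sum>Z\<in>Pow T. F Z) = (1 - p) * (\<Sum>Z\<in>Pow T. if A \<subseteq> Z then pm p T Z else 0)"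
      unfolding sum_distrib_left
      by (rule sum.cong) (use pm1 in \<open>auto simp: F_def\<close>)
    moreover have "(\<Sum>Z\<in>Pow T. F (insert x Z)) = p * (\<Sum>Z\<in>Pow T. if A \<subseteq> Z then pm p T Z else 0)"
      unfolding sum_distrib_left
      by (rule sum.cong) (use False pm2 in \<open>auto simp: F_def subset_insert\<close>)
    ultimately show ?thesis using split insert.IH[OF A'] by (simp add: F_def algebra_simps)
  qed
qed

lemma pm_nonneg: "0 \<le> p \<Longrightarrow> p \<le> 1 \<Longrightarrow> pm p T Z \<ge> 0"
  by (simp add: pm_def)

lemma exp_one: "finite S \<Longrightarrow> (\<Sum>Z\<in>Pow S. pm p S Z) = 1"
  using pm_sum[of S "{}" p] by simp

lemma exp_lin:
  assumes "finite S"
  shows "(\<Sum>Z\<in>Pow S. pm p S Z * (\<Sum>l\<in>Z. f l)) = p * (\<Sum>l\<in>S. f l)"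
proof -
  have "(\<Sum>Z\<in>Pow S. pm p S Z * (\<Sum>l\<in>Z. f l))
      = (\<Sum>Z\<in>Pow S. \<Sum>l\<in>S. f l * (if {l} \<subseteq> Z then pm p S Z else 0))"
  proof (rule sum.cong)
    fix Z assume "Z \<in> Pow S"
    then have "(\<Sum>l\<in>Z. f l) = (\<Sum>l\<in>S. if l \<in> Z then f l else 0)"
      using assms sum.inter_restrict[OF assms, of "\<lambda>l. f l" Z] by (simp add: Int_absorb1)
    then show "pm p S Z * (\<Sum>l\<in>Z. f l) = (\<Sum>l\<in>S. f l * (if {l} \<subseteq> Z then pm p S Z else 0))"
      by (simp add: sum_distrib_left if_distrib mult.commute cong: if_cong)
  qed simp
  also have "\<dots> = (\<Sum>l\<in>S. f l * (\<Sum>Z\<in>Pow S. if {l} \<subseteq> Z then pm p S Z else 0))"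
    by (subst sum.swap) (simp add: sum_distrib_left)
  also have "\<dots> = (\<Sum>l\<in>S. f l * p)"
  proof (rule sum.cong)
    fix l assume "l \<in> S"
    then have "(\<Sum>Z\<in>Pow S. if {l} \<subseteq> Z then pm p S Z else 0) = p ^ card {l}"
      by (intro pm_sum assms) auto
    then show "f l * (\<Sum>Z\<in>Pow S. if {l} \<subseteq> Z then pm p S Z else 0) = f l * p" by simp
  qed simp
  finally show ?thesis by (simp add: sum_distrib_left mult.commute)
qed

lemma exp_quad:
  assumes "finite S"
  shows "(\<Sum>Z\<in>Pow S. pm p S Z * (\<Sum>l\<in>Z. \<Sum>l'\<in>Z. g l l'))
     = (\<Sum>l\<in>S. \<Sum>l'\<in>S. g l l' * p ^ card {l, l'})"
proof -
  have "(\<Sum>Z\<in>Pow S. pm p S Z * (\<Sum>l\<in>Z. \<Sum>l'\<in>Z. g l l'))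
      = (\<Sum>Z\<in>Pow S. \<Sum>l\<in>S. \<Sum>l'\<in>S. g l l' * (if {l, l'} \<subseteq> Z then pm p S Z else 0))"
  proof (rule sum.cong)
    fix Z assume Z: "Z \<in> Pow S"
    have "(\<Sum>l\<in>Z. \<Sum>l'\<in>Z. g l l') = (\<Sum>l\<in>S. if l \<in> Z then (\<Sum>l'\<in>Z. g l l') else 0)"
      using assms Z sum.inter_restrict[OF assms, of "\<lambda>l. \<Sum>l'\<in>Z. g l l'" Z] by (simp add: Int_absorb1)
    also have "\<dots> = (\<Sum>l\<in>S. \<Sum>l'\<in>S. if l \<in> Z \<and> l' \<in> Z then g l l' else 0)"
    proof (rule sum.cong)
      fix l assume "l \<in> S"
      have "(\<Sum>l'\<in>Z. g l l') = (\<Sum>l'\<in>S. if l' \<in> Z then g l l' else 0)"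
        using assms Z sum.inter_restrict[OF assms, of "\<lambda>l'. g l l'" Z] by (simp add: Int_absorb1)
      then show "(if l \<in> Z then (\<Sum>l'\<in>Z. g l l') else 0) = (\<Sum>l'\<in>S. if l \<in> Z \<and> l' \<in> Z then g l l' else 0)"
        by simp
    qed simp
    finally show "pm p S Z * (\<Sum>l\<in>Z. \<Sum>l'\<in>Z. g l l') = (\<Sum>l\<in>S. \<Sum>l'\<in>S. g l l' * (if {l, l'} \<subseteq> Z then pm p S Z else 0))"
      by (simp add: sum_distrib_left if_distrib mult.commute cong: if_cong)
  qed simp
  also have "\<dots> = (\<Sum>l\<in>S. \<Sum>l'\<in>S. g l l' * (\<Sum>Z\<in>Pow S. if {l, l'} \<subseteq> Z then pm p S Z else 0))"
    by (subst sum.swap) (simp add: sum_distrib_left sum.swap[of _ "Pow S"])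
  also have "\<dots> = (\<Sum>l\<in>S. \<Sum>l'\<in>S. g l l' * p ^ card {l, l'})"
  proof (intro sum.cong refl)
    fix l l' assume "l \<in> S" "l' \<in> S"
    then have "(\<Sum>Z\<in>Pow S. if {l, l'} \<subseteq> Z then pm p S Z else 0) = p ^ card {l, l'}"
      by (intro pm_sum assms) auto
    then show "g l l' * (\<Sum>Z\<in>Pow S. if {l, l'} \<subseteq> Z then pm p S Z else 0) = g l l' * p ^ card {l, l'}" by simp
  qed
  finally show ?thesis .
qed


theorem lemma4:
  fixes \<eta> \<kappa> \<sigma> \<xi> \<epsilon> :: real
    and u v :: "'l \<Rightarrow> real^2"
    and P w :: "'l \<Rightarrow> real"
    and L Sstar X :: "'l set"
  assumes "\<eta> > 0" and "\<kappa> > 2" and "\<sigma> > 0" and "\<xi> \<ge> 0"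
    and "0 < \<epsilon>" and "\<epsilon> < 1"
    and "finite L"
    and "\<forall>l. P l > 0"
    and "\<forall>l\<in>L. P l * \<eta> * link_len u v l powr (-\<kappa>) > \<sigma> * \<xi>"
    and "\<forall>l\<in>L. w l \<ge> 0"
    and "p_signal \<eta> \<kappa> \<sigma> \<xi> u v P 1 Sstar"
    and "X \<subseteq> L"
    and "p_signal \<eta> \<kappa> \<sigma> \<xi> u v P (1 / (1 - \<epsilon>)) X"
    and "\<forall>Y. Y \<subseteq> L \<and> p_signal \<eta> \<kappa> \<sigma> \<xi> u v P (1 / (1 - \<epsilon>)) Y
              \<longrightarrow> total_weight w Y \<le> total_weight w X"
  shows "total_weight w (Sstar \<inter> L) \<le> 4 / (1 - \<epsilon>)^2 * total_weight w X"
proof -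
  note A = assms
  define t where "t = 1 - \<epsilon>"
  have t0: "0 < t" and t1: "t \<le> 1" using A(5,6) by (auto simp: t_def)
  define \<alpha> where "\<alpha> = (\<lambda>l' l. c_fac \<eta> \<kappa> \<sigma> \<xi> u v P l * rel_interf \<eta> \<kappa> u v P l' l)"
  define S where "S = Sstar \<inter> L"
  have finSs: "finite Sstar" using A(11) by (simp add: p_signal_def)
  have finS: "finite S" using finSs by (simp add: S_def)
  have SL: "S \<subseteq> L" by (simp add: S_def)
  have cpos: "c_fac \<eta> \<kappa> \<sigma> \<xi> u v P l > 0" if "l \<in> L" for l
  proof -
    let ?d = "P l * \<eta> * link_len u v l powr (-\<kappa>)"
    have "?d > \<sigma> * \<xi>" using A(9) that by auto
    moreover have "\<sigma> * \<xi> \<ge> 0" using A(3,4) by simp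
    ultimately have "\<sigma> * \<xi> / ?d < 1" by (simp add: divide_less_eq)
    then show ?thesis using A(3) by (simp add: c_fac_def)
  qed
  have rnn: "rel_interf \<eta> \<kappa> u v P l' l \<ge> 0" for l l'
  proof -
    have "P l' * \<eta> * dist (u l') (v l) powr (-\<kappa>) \<ge> 0" using A(1,8) by (simp add: less_imp_le)
    moreover have "P l * \<eta> * link_len u v l powr (-\<kappa>) \<ge> 0" using A(1,8) by (simp add: less_imp_le)
    ultimately show ?thesis unfolding rel_interf_def using divide_nonneg_nonneg by (simp only: if_split) blast
  qed
  have \<alpha>nn: "\<alpha> l' l \<ge> 0" if "l \<in> L" for l l'
    using cpos[OF that] rnn[of l' l] by (simp add: \<alpha>_def)
  have \<alpha>diag: "\<alpha> l l = 0" for l by (simp add: \<alpha>_def rel_interf_def)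
  have aff: "affectness \<eta> \<kappa> \<sigma> \<xi> u v P Z l = (\<Sum>l'\<in>Z. \<alpha> l' l)" for Z l
    by (simp add: affectness_def \<alpha>_def sum_distrib_left)
  have affS: "(\<Sum>l'\<in>S. \<alpha> l' l) \<le> 1" if "l \<in> S" for l
  proof -
    have "(\<Sum>l'\<in>S. \<alpha> l' l) \<le> (\<Sum>l'\<in>Sstar. \<alpha> l' l)"
      using that finSs \<alpha>nn[of l] by (intro sum_mono2) (auto simp: S_def)
    also have "\<dots> \<le> 1" using A(11) that aff by (auto simp: p_signal_def S_def)
    finally show ?thesis .
  qed
  define W where "W = total_weight w S"
  have wS: "w l \<ge> 0" if "l \<in> S" for l using A(10) that SL by auto
  define \<Phi> where "\<Phi> = (\<lambda>Z. (\<Sum>l\<in>Z. w l) - (1 / t) * (\<Sum>l\<in>Z. \<Sum>l'\<in>Z. w l * \<alpha> l' l))"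
  define p where "p = t / 2"
  have p0: "0 \<le> p" and p1: "p \<le> 1" using t0 t1 by (auto simp: p_def)
  define E where "E = (\<Sum>Z\<in>Pow S. pm p S Z * \<Phi> Z)"
  have quad: "(\<Sum>l\<in>S. \<Sum>l'\<in>S. w l * \<alpha> l' l * p ^ card {l, l'}) \<le> p^2 * W"
  proof -
    have "(\<Sum>l\<in>S. \<Sum>l'\<in>S. w l * \<alpha> l' l * p ^ card {l, l'}) = (\<Sum>l\<in>S. p^2 * (w l * (\<Sum>l'\<in>S. \<alpha> l' l)))"
    proof (rule sum.cong)
      fix l assume "l \<in> S"
      have "(\<Sum>l'\<in>S. w l * \<alpha> l' l * p ^ card {l, l'}) = (\<Sum>l'\<in>S. p^2 * (w l * \<alpha> l' l))"
      proof (rule sum.cong)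
        fix l' assume "l' \<in> S"
        show "w l * \<alpha> l' l * p ^ card {l, l'} = p^2 * (w l * \<alpha> l' l)"
          by (cases "l' = l") (auto simp: \<alpha>diag power2_eq_square)
      qed simp
      then show "(\<Sum>l'\<in>S. w l * \<alpha> l' l * p ^ card {l, l'}) = p^2 * (w l * (\<Sum>l'\<in>S. \<alpha> l' l))"
        by (simp add: sum_distrib_left)
    qed simp
    also have "\<dots> \<le> (\<Sum>l\<in>S. p^2 * w l)"
      using affS wS by (intro sum_mono mult_left_mono) (auto simp: mult_left_le)
    also have "\<dots> = p^2 * W" by (simp add: W_def total_weight_def sum_distrib_left)
    finally show ?thesis .
  qed
  have e1: "(\<Sum>Z\<in>Pow S. pm p S Z * (\<Sum>l\<in>Z. w l)) = p * W"
    using exp_lin[OF finS] by (simp add: W_def total_weight_def)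
  have e2: "(\<Sum>Z\<in>Pow S. pm p S Z * (\<Sum>l\<in>Z. \<Sum>l'\<in>Z. w l * \<alpha> l' l))
      = (\<Sum>l\<in>S. \<Sum>l'\<in>S. w l * \<alpha> l' l * p ^ card {l, l'})"
    by (rule exp_quad[OF finS])
  have "E = (\<Sum>Z\<in>Pow S. pm p S Z * (\<Sum>l\<in>Z. w l) - (1 / t) * (pm p S Z * (\<Sum>l\<in>Z. \<Sum>l'\<in>Z. w l * \<alpha> l' l)))"
    unfolding E_def \<Phi>_def by (rule sum.cong) (auto simp: algebra_simps)
  also have "\<dots> = p * W - (1 / t) * (\<Sum>l\<in>S. \<Sum>l'\<in>S. w l * \<alpha> l' l * p ^ card {l, l'})"
    unfolding sum_subtractf e1 sum_distrib_left[of "1/t", symmetric] e2 ..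
  also have "\<dots> \<ge> p * W - (1 / t) * (p^2 * W)"
    using quad t0 by (intro diff_left_mono mult_left_mono) auto
  finally have Ege: "E \<ge> t / 4 * W"
    using t0 by (simp add: p_def power2_eq_square field_simps)
  obtain Z where Z: "Z \<in> Pow S" "\<forall>Z'\<in>Pow S. \<Phi> Z' \<le> \<Phi> Z"
  proof -
    have "finite (\<Phi> ` Pow S)" "\<Phi> ` Pow S \<noteq> {}" using finS by auto
    then have "Max (\<Phi> ` Pow S) \<in> \<Phi> ` Pow S" by (rule Max_in)
    then obtain Z where "Z \<in> Pow S" "\<Phi> Z = Max (\<Phi> ` Pow S)" by auto
    moreover have "\<forall>Z'\<in>Pow S. \<Phi> Z' \<le> Max (\<Phi> ` Pow S)" using finS by auto
    ultimately show ?thesis using that by auto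
  qed
  have "E \<le> (\<Sum>Z'\<in>Pow S. pm p S Z' * \<Phi> Z)"
    unfolding E_def using Z(2) pm_nonneg[OF p0 p1] by (intro sum_mono mult_left_mono) auto
  also have "\<dots> = \<Phi> Z" using exp_one[OF finS] by (simp add: sum_distrib_right[symmetric])
  finally have PhiZ: "\<Phi> Z \<ge> t / 4 * W" using Ege by simp
  have ZS: "Z \<subseteq> S" using Z(1) by simp
  have finZ: "finite Z" using ZS finS finite_subset by blast
  define Y where "Y = {l \<in> Z. (\<Sum>l'\<in>Z. \<alpha> l' l) \<le> t}"
  have YZ: "Y \<subseteq> Z" by (auto simp: Y_def)
  have finY: "finite Y" using YZ finZ finite_subset by blast
  have Ysig: "p_signal \<eta> \<kappa> \<sigma> \<xi> u v P (1 / (1 - \<epsilon>)) Y"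
    unfolding p_signal_def
  proof (intro conjI ballI impI)
    show "finite Y" by fact
  next
    fix l l' assume "l \<in> Y" "l' \<in> Y" "l' \<noteq> l"
    moreover have "l \<in> Sstar" "l' \<in> Sstar" using \<open>l \<in> Y\<close> \<open>l' \<in> Y\<close> YZ ZS by (auto simp: S_def)
    ultimately show "u l' \<noteq> v l" using A(11) unfolding p_signal_def by blast
  next
    fix l assume l: "l \<in> Y"
    then have lL: "l \<in> L" using YZ ZS SL by auto
    have "(\<Sum>l'\<in>Y. \<alpha> l' l) \<le> (\<Sum>l'\<in>Z. \<alpha> l' l)"
      using finZ YZ \<alpha>nn[OF lL] by (intro sum_mono2) auto
    also have "\<dots> \<le> t" using l by (simp add: Y_def)
    finally show "affectness \<eta> \<kappa> \<sigma> \<xi> u v P Y l \<le> 1 / (1 / (1 - \<epsilon>))"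
      by (simp add: aff t_def)
  qed
  have WYX: "total_weight w Y \<le> total_weight w X"
    using A(14) Ysig YZ ZS SL by auto
  have "(\<Sum>l\<in>Z - Y. w l) \<le> (\<Sum>l\<in>Z - Y. (1 / t) * (w l * (\<Sum>l'\<in>Z. \<alpha> l' l)))"
  proof (rule sum_mono)
    fix l assume l: "l \<in> Z - Y"
    then have "(\<Sum>l'\<in>Z. \<alpha> l' l) > t" by (auto simp: Y_def)
    moreover have "w l \<ge> 0" using l ZS wS by auto
    ultimately have "w l * t \<le> w l * (\<Sum>l'\<in>Z. \<alpha> l' l)" by (intro mult_left_mono) auto
    then show "w l \<le> (1 / t) * (w l * (\<Sum>l'\<in>Z. \<alpha> l' l))" using t0 by (simp add: field_simps)
  qed
  also have "\<dots> \<le> (\<Sum>l\<in>Z. (1 / t) * (w l * (\<Sum>l'\<in>Z. \<alpha> l' l)))"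
  proof (rule sum_mono2[OF finZ])
    show "Z - Y \<subseteq> Z" by auto
  next
    fix l assume "l \<in> Z - (Z - Y)"
    then have lZ: "l \<in> Z" by auto
    then have lL: "l \<in> L" using ZS SL by auto
    have "0 \<le> (\<Sum>l'\<in>Z. \<alpha> l' l)" using \<alpha>nn[OF lL] by (intro sum_nonneg) auto
    then show "0 \<le> (1 / t) * (w l * (\<Sum>l'\<in>Z. \<alpha> l' l))" using t0 wS lZ ZS by auto
  qed
  also have "\<dots> = (1 / t) * (\<Sum>l\<in>Z. \<Sum>l'\<in>Z. w l * \<alpha> l' l)"
    by (simp add: sum_distrib_left)
  finally have "(\<Sum>l\<in>Z. w l) - (\<Sum>l\<in>Y. w l) \<le> (1 / t) * (\<Sum>l\<in>Z. \<Sum>l'\<in>Z. w l * \<alpha> l' l)"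
    using sum_diff[OF finZ YZ, of w] by simp
  then have "\<Phi> Z \<le> total_weight w Y" by (simp add: \<Phi>_def total_weight_def)
  then have WX: "t / 4 * W \<le> total_weight w X" using PhiZ WYX by linarith
  have WXnn: "total_weight w X \<ge> 0"
    using A(10,12) by (auto simp: total_weight_def intro: sum_nonneg)
  have "W \<le> 4 / t * total_weight w X" using WX t0 by (simp add: field_simps)
  also have "\<dots> \<le> 4 / t^2 * total_weight w X"
    using WXnn t0 t1 by (intro mult_right_mono) (auto simp: power2_eq_square field_simps)
  finally show ?thesis by (simp add: W_def S_def t_def)
qed

end
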